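(* Let $H=1$ and assume the MDP satisfies the low-rank assumption with parameter $d$ (i.e. $r_1$ has rank at most $\lfloor d/2\rfloor$). In the infinite-sample setting (the values $r_1(s,a)$ are known for $(s,a)\in\operatorname{supp}(d^{\pi^\beta})$), let $\widehat Q$ be a minimizer of $\|M\|_{\max}$ over $M\in\mathbb R^{S\times A}$ subject to $\mathbb 1_{d^{\pi^\beta}}\circ M=\mathbb 1_{d^{\pi^\beta}}\circ r_1$ and $\|M\|_\infty\le1$, and let $\widehat J=\sum_{s,a}\mu_1(s)\pi^\theta_1(a\mid s)\widehat Q(s,a)$. Then \[ \big|\widehat J - J^{\pi^\theta}\big|\le2\sqrt{dSA}\,\operatorname{Dis}\big(d^{\pi^\beta},d^{\pi^\theta}\big). \]
   Context: Contextual bandit: finite state (context) set $\mathcal S$, $S=|\mathcal S|$, finite action set $\mathcal A$, $A=|\mathcal A|$, reward $r_1:\mathcal S\times\mathcal A\to[0,1]$, context distribution $\mu_1$. For a policy $\pi_1:\mathcal S\to\Delta(\mathcal A)$, $d^\pi(s,a)=\mu_1(s)\pi_1(a\mid s)$ and $J^\pi=\sum_{s,a}d^\pi(s,a)r_1(s,a)$; $\pi^\theta$ is the target and $\pi^\beta$ the behavior policy. Functions on $\mathcal S\times\mathcal A$ are viewed as $S\times A$ matrices. $\|M\|_{\max}=\min_{U,V:\,M=UV^\top}\|U\|_{2\to\infty}\|V\|_{2\to\infty}$ ($\|\cdot\|_{2\to\infty}$ maximum row Euclidean norm), $\|M\|_\infty=\max|M_{ij}|$, $\mathbb 1_M$ support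 indicator, $\circ$ entrywise product, $\|\cdot\|_{\mathrm{op}}$ spectral norm. Operator discrepancy: $\operatorname{Dis}(p,q)=\min\{\|g-q\|_{\mathrm{op}}:g\in\Delta(\mathcal S\times\mathcal A),\ \operatorname{supp}(g)\subseteq\operatorname{supp}(p)\}$. *)

theory Defs
  imports "HOL-Analysis.Analysis"
begin

text \<open>Matrices on S x A are elements of real^'a^'s (row index s, column index a).\<close>

definition two_to_inf_norm :: "('r::finite \<Rightarrow> nat \<Rightarrow> real) \<Rightarrow> nat \<Rightarrow> real" where
  "two_to_inf_norm U k = Max (range (\<lambda>i. sqrt (\<Sum>l<k. (U i l)\<^sup>2)))"

definition max_norm :: "real^'a::finite^'s::finite \<Rightarrow> real" where
  "max_norm M = Inf {two_to_inf_norm U k * two_to_inf_norm V k | U V k.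
      \<forall>s a. M $ s $ a = (\<Sum>l<k. U s l * V a l)}"

definition entry_inf_norm :: "real^'a::finite^'s::finite \<Rightarrow> real" where
  "entry_inf_norm M = Max (range (\<lambda>(s,a). \<bar>M $ s $ a\<bar>))"

definition op_norm :: "real^'a::finite^'s::finite \<Rightarrow> real" where
  "op_norm M = onorm (\<lambda>x. M *v x)"

definition is_distr :: "real^'a::finite^'s::finite \<Rightarrow> bool" where
  "is_distr g \<longleftrightarrow> (\<forall>s a. g $ s $ a \<ge> 0) \<and> (\<Sum>s\<in>UNIV. \<Sum>a\<in>UNIV. g $ s $ a) = 1"

definition supp :: "real^'a::finite^'s::finite \<Rightarrow> ('s \<times> 'a) set" where
  "supp g = {(s,a). g $ s $ a \<noteq> 0}"

definition Dis :: "real^'a::finite^'s::finite \<Rightarrow> real^'a^'s \<Rightarrow> real" where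
  "Dis p q = Inf {op_norm (g - q) | g. is_distr g \<and> supp g \<subseteq> supp p}"

text \<open>Occupancy d^pi(s,a) = mu(s) pi(a|s) for H = 1.\<close>
definition occ :: "('s::finite \<Rightarrow> real) \<Rightarrow> ('s \<Rightarrow> 'a::finite \<Rightarrow> real) \<Rightarrow> real^'a^'s" where
  "occ \<mu> \<pi> = (\<chi> s a. \<mu> s * \<pi> s a)"

definition policy_value :: "('s::finite \<Rightarrow> real) \<Rightarrow> ('s \<Rightarrow> 'a::finite \<Rightarrow> real) \<Rightarrow> real^'a^'s \<Rightarrow> real" where
  "policy_value \<mu> \<pi> r = (\<Sum>s\<in>UNIV. \<Sum>a\<in>UNIV. occ \<mu> \<pi> $ s $ a * r $ s $ a)"

definition is_policy :: "('s::finite \<Rightarrow> 'a::finite \<Rightarrow> real) \<Rightarrow> bool" where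
  "is_policy \<pi> \<longleftrightarrow> (\<forall>s a. \<pi> s a \<ge> 0) \<and> (\<forall>s. (\<Sum>a\<in>UNIV. \<pi> s a) = 1)"

definition is_state_distr :: "('s::finite \<Rightarrow> real) \<Rightarrow> bool" where
  "is_state_distr \<mu> \<longleftrightarrow> (\<forall>s. \<mu> s \<ge> 0) \<and> (\<Sum>s\<in>UNIV. \<mu> s) = 1"

definition feasible :: "real^'a::finite^'s::finite \<Rightarrow> real^'a^'s \<Rightarrow> real^'a^'s \<Rightarrow> bool" where
  "feasible dbeta r M \<longleftrightarrow>
     (\<forall>s a. (s,a) \<in> supp dbeta \<longrightarrow> M $ s $ a = r $ s $ a) \<and> entry_inf_norm M \<le> 1"

end

theory Submission
  imports Defs
begin

definition Bm :: "('n \<Rightarrow> 's option) \<Rightarrow> ('n \<Rightarrow> real^'n) \<Rightarrow> ('s \<Rightarrow> real^'n) \<Rightarrow> real^'n^'n" where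
  "Bm \<sigma> z u = (\<chi> i. case \<sigma> i of Some s \<Rightarrow> u s | None \<Rightarrow> z i)"

definition mx :: "('s::finite \<Rightarrow> real^'n) \<Rightarrow> real" where
  "mx u = Max (range (\<lambda>s. norm (u s)))"

lemma mx_ge: "norm (u s) \<le> mx u"
  unfolding mx_def by (rule Max_ge) auto

lemma mx_le: "(\<And>s. norm (u s) \<le> b) \<Longrightarrow> mx u \<le> b"
  unfolding mx_def by (subst Max_le_iff) auto

lemma mx_pos: "u s \<noteq> 0 \<Longrightarrow> 0 < mx u"
  using mx_ge[of u s] by (metis zero_less_norm_iff order_less_le_trans)

lemma pow_bound:
  assumes "0 < \<delta>" "real k * \<delta> \<le> 1/2"
  shows "(1 + \<delta>) ^ k \<le> (7/4::real)"
proof -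
  have "(1 + \<delta>) ^ k \<le> exp \<delta> ^ k"
    by (rule power_mono) (use assms in auto)
  also have "\<dots> = exp (real k * \<delta>)" by (simp add: exp_of_nat_mult)
  also have "\<dots> \<le> exp (1/2)" using assms by simp
  also have "\<dots> \<le> 1 + 1/2 + (1/2)\<^sup>2" by (rule exp_bound) auto
  finally show ?thesis by (simp add: power2_eq_square)
qed

lemma terminal:
  fixes u :: "'s::finite \<Rightarrow> real^'n" and v :: "'b \<Rightarrow> real^'n"
  assumes T: "\<forall>w\<in>W. norm w = 1 \<longrightarrow> (\<exists>s. \<delta> * (mx u)\<^sup>2 \<le> (u s \<bullet> w)\<^sup>2)"
    and hv: "\<forall>a. v a \<in> W" and hu: "\<forall>s a. \<bar>u s \<bullet> v a\<bar> \<le> 1" and m: "0 < mx u" and d: "0 < \<delta>"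
    and W: "subspace W"
  shows "norm (v a) \<le> 1 / (sqrt \<delta> * mx u)"
proof (cases "v a = 0")
  case True
  then show ?thesis using m d by simp
next
  case False
  let ?w = "v a /\<^sub>R norm (v a)"
  have "?w \<in> W" using hv W by (simp add: subspace_scale)
  moreover have "norm ?w = 1" using False by simp
  ultimately obtain s where s: "\<delta> * (mx u)\<^sup>2 \<le> (u s \<bullet> ?w)\<^sup>2" using T by blast
  have nv: "0 < norm (v a)" using False by simp
  have "(u s \<bullet> ?w)\<^sup>2 = (u s \<bullet> v a)\<^sup>2 / (norm (v a))\<^sup>2"
  proof -
    have "u s \<bullet> ?w = (u s \<bullet> v a) / norm (v a)" by (simp add: divide_inverse mult.commute)
    then show ?thesis by (simp add: power_divide)
  qed
  also have "\<dots> \<le> 1 / (norm (v a))\<^sup>2"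
  proof (rule divide_right_mono)
    have "\<bar>u s \<bullet> v a\<bar>\<^sup>2 \<le> 1\<^sup>2" using hu by (intro power_mono) auto
    then show "(u s \<bullet> v a)\<^sup>2 \<le> 1" by simp
  qed simp
  finally have "\<delta> * (mx u)\<^sup>2 \<le> 1 / (norm (v a))\<^sup>2" using s by linarith
  then have "(norm (v a))\<^sup>2 \<le> 1 / (\<delta> * (mx u)\<^sup>2)"
    using nv m d by (simp add: field_simps)
  then have "norm (v a) \<le> sqrt (1 / (\<delta> * (mx u)\<^sup>2))" by (rule real_le_rsqrt)
  also have "\<dots> = 1 / (sqrt \<delta> * mx u)"
    using m d by (simp add: real_sqrt_divide real_sqrt_mult)
  finally show ?thesis .
qed


lemma det_bound:
  fixes A :: "real^'n^'n"
  shows "\<bar>det A\<bar> \<le> fact CARD('n) * (\<Prod>i\<in>UNIV. norm (A$i))"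
proof -
  have "\<bar>det A\<bar> \<le> (\<Sum>p\<in>{p. p permutes (UNIV::'n set)}. \<bar>of_int (sign p) * (\<Prod>i\<in>UNIV. A$i$p i)\<bar>)"
    unfolding det_def by (rule sum_abs)
  also have "\<dots> \<le> (\<Sum>p\<in>{p. p permutes (UNIV::'n set)}. (\<Prod>i\<in>UNIV. norm (A$i)))"
  proof (rule sum_mono)
    fix p :: "'n \<Rightarrow> 'n"
    have "\<bar>of_int (sign p) :: real\<bar> = 1" by (simp add: sign_def)
    then have "\<bar>of_int (sign p) * (\<Prod>i\<in>UNIV. A$i$p i)\<bar> = (\<Prod>i\<in>UNIV. \<bar>A$i$p i\<bar>)"
      by (simp add: abs_mult abs_prod)
    also have "\<dots> \<le> (\<Prod>i\<in>UNIV. norm (A$i))"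
      by (rule prod_mono) (simp add: component_le_norm_cart)
    finally show "\<bar>of_int (sign p) * (\<Prod>i\<in>UNIV. A$i$p i)\<bar> \<le> (\<Prod>i\<in>UNIV. norm (A$i))" .
  qed
  also have "\<dots> = fact CARD('n) * (\<Prod>i\<in>UNIV. norm (A$i))"
    using card_permutations[of "UNIV::'n set" "CARD('n)"] by simp
  finally show ?thesis .
qed

definition rk1 :: "real \<Rightarrow> real^'n \<Rightarrow> real^'n \<Rightarrow> real^'n" where
  "rk1 c w x = x + (c * (w \<bullet> x)) *\<^sub>R w"

lemma linear_rk1: "linear (rk1 c w)"
  unfolding rk1_def linear_iff by (simp add: algebra_simps inner_add_right)

lemma det_rk1:
  fixes w :: "real^'n"
  assumes "norm w = 1"
  shows "det (matrix (rk1 c w)) = 1 + c"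
proof -
  fix i0 :: 'n
  let ?e = "axis i0 (1::real)"
  have ne: "norm ?e = norm w" using assms by simp
  obtain g where g: "orthogonal_transformation g" "g ?e = w"
    using orthogonal_transformation_exists[OF ne] by blast
  have lg: "linear g" using g(1) orthogonal_transformation_linear by blast
  have comm: "rk1 c w \<circ> g = g \<circ> rk1 c ?e"
  proof
    fix y
    have "g ?e \<bullet> g y = ?e \<bullet> y" using g(1) unfolding orthogonal_transformation_def by blast
    then have 1: "w \<bullet> g y = ?e \<bullet> y" using g(2) by simp
    have "g (y + (c * (?e \<bullet> y)) *\<^sub>R ?e) = g y + (c * (?e \<bullet> y)) *\<^sub>R g ?e"
      using linear_add[OF lg] linear_scale[OF lg] by metis
    then show "(rk1 c w \<circ> g) y = (g \<circ> rk1 c ?e) y"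
      unfolding rk1_def o_def 1 g(2) by simp
  qed
  have "matrix (rk1 c w) ** matrix g = matrix g ** matrix (rk1 c ?e)"
    using matrix_compose[OF lg linear_rk1, of c w] matrix_compose[OF linear_rk1 lg, of c ?e] comm by simp
  then have "det (matrix (rk1 c w)) * det (matrix g) = det (matrix g) * det (matrix (rk1 c ?e))"
    using det_mul by metis
  moreover have "det (matrix g) \<noteq> 0" using orthogonal_transformation_det[OF g(1)] by auto
  ultimately have eq: "det (matrix (rk1 c w)) = det (matrix (rk1 c ?e))" by simp
  have ax: "\<And>i j. axis j (1::real) $ i = (if i = j then 1 else 0)" by (simp add: axis_def)
  have "det (matrix (rk1 c ?e)) = (\<Prod>i\<in>UNIV. matrix (rk1 c ?e) $ i $ i)"
    by (rule det_diagonal) (simp add: matrix_def rk1_def inner_axis_axis ax)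
  also have "\<dots> = (\<Prod>i\<in>UNIV. if i = i0 then 1 + c else 1)"
    by (rule prod.cong) (auto simp: matrix_def rk1_def inner_axis_axis ax)
  also have "\<dots> = 1 + c" by (simp add: prod.If_cases)
  finally show ?thesis using eq by simp
qed

lemma pot_bound:
  fixes \<sigma> :: "'n::finite \<Rightarrow> 's::finite option" and u :: "'s \<Rightarrow> real^'n"
  shows "\<bar>det (Bm \<sigma> z u)\<bar> \<le> (fact CARD('n) * (\<Prod>i\<in>{i. \<sigma> i = None}. norm (z i))) * mx u ^ card {i. \<sigma> i \<noteq> None}"
proof -
  have m0: "0 \<le> mx u" using mx_ge[of u] norm_ge_zero order_trans by metis
  have "\<bar>det (Bm \<sigma> z u)\<bar> \<le> fact CARD('n) * (\<Prod>i\<in>UNIV. norm (Bm \<sigma> z u $ i))" by (rule det_bound)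
  also have "(\<Prod>i\<in>UNIV. norm (Bm \<sigma> z u $ i)) = (\<Prod>i\<in>UNIV. if \<sigma> i \<noteq> None then norm (u (the (\<sigma> i))) else norm (z i))"
    by (rule prod.cong) (auto simp: Bm_def split: option.split)
  also have "\<dots> = (\<Prod>i\<in>{i. \<sigma> i \<noteq> None}. norm (u (the (\<sigma> i)))) * (\<Prod>i\<in>{i. \<sigma> i = None}. norm (z i))"
    by (simp add: prod.If_cases Collect_neg_eq[symmetric])
  also have "\<dots> \<le> mx u ^ card {i. \<sigma> i \<noteq> None} * (\<Prod>i\<in>{i. \<sigma> i = None}. norm (z i))"
  proof (rule mult_right_mono)
    have "(\<Prod>i\<in>{i. \<sigma> i \<noteq> None}. norm (u (the (\<sigma> i)))) \<le> (\<Prod>i\<in>{i. \<sigma> i \<noteq> None}. mx u)"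
      by (rule prod_mono) (simp add: mx_ge)
    then show "(\<Prod>i\<in>{i. \<sigma> i \<noteq> None}. norm (u (the (\<sigma> i)))) \<le> mx u ^ card {i. \<sigma> i \<noteq> None}" by simp
  qed (simp add: prod_nonneg)
  finally show ?thesis by (simp add: mult_left_mono algebra_simps)
qed

lemma norm_rk1:
  fixes w y :: "real^'n"
  assumes "norm w = 1"
  shows "(norm (rk1 (sqrt 2 - 1) w y))\<^sup>2 = (norm y)\<^sup>2 + (w \<bullet> y)\<^sup>2"
proof -
  define c where "c = sqrt 2 - 1"
  define a where "a = c * (w \<bullet> y)"
  have ww: "w \<bullet> w = 1" using assms by (simp add: norm_eq_1)
  have c: "2*c + c\<^sup>2 = 1" by (simp add: c_def power2_eq_square algebra_simps)
  have "(norm (rk1 c w y))\<^sup>2 = (y + a *\<^sub>R w) \<bullet> (y + a *\<^sub>R w)"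
    by (simp add: rk1_def a_def power2_norm_eq_inner)
  also have "\<dots> = y \<bullet> y + 2 * a * (w \<bullet> y) + a * a * (w \<bullet> w)"
    by (simp add: inner_add_left inner_add_right inner_commute[of y w] algebra_simps)
  also have "\<dots> = (norm y)\<^sup>2 + (2*c + c\<^sup>2) * (w \<bullet> y)\<^sup>2"
    using assms by (simp add: a_def dot_square_norm power2_eq_square algebra_simps)
  finally show ?thesis using c by (simp add: c_def)
qed

lemma inner_rk1_gen:
  fixes w x v :: "real^'n"
  assumes "w \<bullet> w = 1"
  shows "rk1 c w x \<bullet> (v - (b * (w \<bullet> v)) *\<^sub>R w) = x \<bullet> v + (w \<bullet> x) * (w \<bullet> v) * (c - b - c * b)"
  using assms by (simp add: rk1_def inner_add_left inner_diff_right inner_commute[of x w] algebra_simps)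

lemma inner_rk1:
  fixes w x v :: "real^'n"
  assumes "norm w = 1" "1 + c \<noteq> 0"
  shows "rk1 c w x \<bullet> (v - (c/(1+c) * (w \<bullet> v)) *\<^sub>R w) = x \<bullet> v"
proof -
  have ww: "w \<bullet> w = 1" using assms by (simp add: norm_eq_1)
  have "c - c/(1+c) - c * (c/(1+c)) = 0" using assms(2) by (simp add: field_simps)
  then show ?thesis using inner_rk1_gen[OF ww, where c=c and b="c/(1+c)" and x=x and v=v] by simp
qed

lemma row_mult_transpose:
  fixes A B :: "real^'n^'n"
  shows "(A ** transpose B) $ i = B *v (A $ i)"
  by (simp add: vec_eq_iff matrix_matrix_mult_def matrix_vector_mult_def transpose_def mult.commute)

lemma step_det:
  fixes \<sigma> :: "'n::finite \<Rightarrow> 's::finite option" and u :: "'s \<Rightarrow> real^'n"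
  assumes zW: "\<And>i x. \<sigma> i = None \<Longrightarrow> x \<in> W \<Longrightarrow> z i \<bullet> x = 0" and w: "w \<in> W" "norm w = 1"
  shows "\<bar>det (Bm \<sigma> z (\<lambda>s. rk1 (sqrt 2 - 1) w (u s)))\<bar> = sqrt 2 * \<bar>det (Bm \<sigma> z u)\<bar>"
proof -
  define c where "c = sqrt 2 - 1"
  have "Bm \<sigma> z (\<lambda>s. rk1 c w (u s)) = Bm \<sigma> z u ** transpose (matrix (rk1 c w))"
  proof (subst vec_eq_iff, intro allI)
    fix i
    have "(Bm \<sigma> z u ** transpose (matrix (rk1 c w))) $ i = rk1 c w (Bm \<sigma> z u $ i)"
      using fun_cong[OF matrix_vector_mul(2)[OF linear_rk1]] by (simp add: row_mult_transpose)
    also have "\<dots> = Bm \<sigma> z (\<lambda>s. rk1 c w (u s)) $ i"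
    proof (cases "\<sigma> i")
      case None
      then have "w \<bullet> z i = 0" using zW[of i w] w by (simp add: inner_commute)
      then show ?thesis using None by (simp add: Bm_def rk1_def)
    qed (simp add: Bm_def)
    finally show "Bm \<sigma> z (\<lambda>s. rk1 c w (u s)) $ i = (Bm \<sigma> z u ** transpose (matrix (rk1 c w))) $ i" by simp
  qed
  then have "det (Bm \<sigma> z (\<lambda>s. rk1 c w (u s))) = det (Bm \<sigma> z u) * (1 + c)"
    by (simp add: det_mul det_rk1[OF w(2)])
  then show ?thesis by (simp add: c_def abs_mult)
qed

lemma step_mx:
  fixes u :: "'s::finite \<Rightarrow> real^'n"
  assumes w: "norm w = 1" and small: "\<forall>s. (u s \<bullet> w)\<^sup>2 < \<delta> * (mx u)\<^sup>2" and d: "0 \<le> \<delta>"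
  shows "mx (\<lambda>s. rk1 (sqrt 2 - 1) w (u s)) \<le> mx u * sqrt (1 + \<delta>)"
proof (rule mx_le)
  fix s
  have m0: "0 \<le> mx u" using mx_ge[of u] norm_ge_zero order_trans by metis
  have "(norm (rk1 (sqrt 2 - 1) w (u s)))\<^sup>2 = (norm (u s))\<^sup>2 + (w \<bullet> u s)\<^sup>2" by (rule norm_rk1[OF w])
  also have "\<dots> \<le> (mx u)\<^sup>2 + \<delta> * (mx u)\<^sup>2"
  proof (rule add_mono)
    show "(norm (u s))\<^sup>2 \<le> (mx u)\<^sup>2" by (rule power_mono[OF mx_ge[of u s] norm_ge_zero])
    show "(w \<bullet> u s)\<^sup>2 \<le> \<delta> * (mx u)\<^sup>2" using small[rule_format, of s] by (simp add: inner_commute)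
  qed
  also have "\<dots> = (mx u)\<^sup>2 * (sqrt (1 + \<delta>))\<^sup>2" using d by (simp add: algebra_simps)
  also have "\<dots> = (mx u * sqrt (1 + \<delta>))\<^sup>2" by (simp only: power_mult_distrib)
  finally have h: "(norm (rk1 (sqrt 2 - 1) w (u s)))\<^sup>2 \<le> (mx u * sqrt (1 + \<delta>))\<^sup>2" .
  have "0 \<le> mx u * sqrt (1 + \<delta>)" using m0 d by simp
  then show "norm (rk1 (sqrt 2 - 1) w (u s)) \<le> mx u * sqrt (1 + \<delta>)"
    by (rule power2_le_imp_le[OF h])
qed

lemma iterate:
  fixes \<sigma> :: "'n::finite \<Rightarrow> 's::finite option" and z :: "'n \<Rightarrow> real^'n" and W :: "(real^'n) set"
    and u :: "'s \<Rightarrow> real^'n" and v :: "'b::finite \<Rightarrow> real^'n"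
  assumes W: "subspace W" and d: "0 < \<delta>" and kd: "real (card {i. \<sigma> i \<noteq> None}) * \<delta> \<le> 1/2"
    and zW: "\<And>i x. \<sigma> i = None \<Longrightarrow> x \<in> W \<Longrightarrow> z i \<bullet> x = 0"
    and hv: "\<forall>a. v a \<in> W" and hu: "\<forall>s a. \<bar>u s \<bullet> v a\<bar> \<le> 1" and hs: "u s0 \<noteq> 0"
    and hp: "(fact CARD('n) * (\<Prod>i\<in>{i. \<sigma> i = None}. norm (z i))) * mx u ^ card {i. \<sigma> i \<noteq> None}
              < \<bar>det (Bm \<sigma> z u)\<bar> * sqrt (8/7) ^ N"
  shows "\<exists>(u'::'s \<Rightarrow> real^'n) (v'::'b \<Rightarrow> real^'n) mu. 0 < mu \<and> (\<forall>s. norm (u' s) \<le> mu) \<and> (\<forall>a. norm (v' a) \<le> 1 / (sqrt \<delta> * mu))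
           \<and> (\<forall>s a. u' s \<bullet> v' a = u s \<bullet> v a)"
  using hv hu hs hp
proof (induction N arbitrary: u v s0)
  case (0 u v s0)
  then show ?case using pot_bound[of \<sigma> z u] by simp
next
  case (Suc N u v s0)
  have m: "0 < mx u" using mx_pos Suc.prems(3) by blast
  show ?case
  proof (cases "\<forall>w\<in>W. norm w = 1 \<longrightarrow> (\<exists>s. \<delta> * (mx u)\<^sup>2 \<le> (u s \<bullet> w)\<^sup>2)")
    case True
    have "\<forall>a. norm (v a) \<le> 1 / (sqrt \<delta> * mx u)"
      using terminal[OF True Suc.prems(1) Suc.prems(2) m d W] by blast
    moreover have "\<forall>s. norm (u s) \<le> mx u" by (simp add: mx_ge)
    ultimately have "0 < mx u \<and> (\<forall>s. norm (u s) \<le> mx u) \<and> (\<forall>a. norm (v a) \<le> 1 / (sqrt \<delta> * mx u))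
           \<and> (\<forall>s a. u s \<bullet> v a = u s \<bullet> v a)" using m by simp
    then show ?thesis by blast
  next
    case False
    then obtain w where w: "w \<in> W" "norm w = 1" "\<forall>s. (u s \<bullet> w)\<^sup>2 < \<delta> * (mx u)\<^sup>2"
      by (auto simp: not_le)
    define c where "c = sqrt 2 - 1"
    have c0: "1 + c \<noteq> 0" by (simp add: c_def)
    define u' where "u' = (\<lambda>s. rk1 c w (u s))"
    define v' where "v' = (\<lambda>a. v a - (c/(1+c) * (w \<bullet> v a)) *\<^sub>R w)"
    have inn: "u' s \<bullet> v' a = u s \<bullet> v a" for s a
      using inner_rk1[OF w(2) c0] by (simp add: u'_def v'_def)
    have hv': "\<forall>a. v' a \<in> W"
      using Suc.prems(1) w(1) W by (simp add: v'_def subspace_diff subspace_scale)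
    have hu': "\<forall>s a. \<bar>u' s \<bullet> v' a\<bar> \<le> 1" using Suc.prems(2) inn by simp
    have "(norm (u' s0))\<^sup>2 = (norm (u s0))\<^sup>2 + (w \<bullet> u s0)\<^sup>2"
      unfolding u'_def c_def by (rule norm_rk1[OF w(2)])
    moreover have "0 < (norm (u s0))\<^sup>2" using Suc.prems(3) by simp
    ultimately have hs': "u' s0 \<noteq> 0" by (metis add_pos_nonneg norm_zero zero_le_power2 power_zero_numeral less_irrefl)
    have det': "\<bar>det (Bm \<sigma> z u')\<bar> = sqrt 2 * \<bar>det (Bm \<sigma> z u)\<bar>"
      using step_det[OF zW w(1) w(2), where u=u] by (simp add: u'_def c_def)
    have mx': "mx u' \<le> mx u * sqrt (1 + \<delta>)"
      using step_mx[OF w(2) w(3)] d by (simp add: u'_def c_def)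
    define F where "F = fact CARD('n) * (\<Prod>i\<in>{i. \<sigma> i = None}. norm (z i))"
    define k where "k = card {i. \<sigma> i \<noteq> None}"
    have F0: "0 \<le> F" by (simp add: F_def prod_nonneg)
    have mx0: "0 \<le> mx u'" using mx_ge[of u'] norm_ge_zero order_trans by metis
    have "(1 + \<delta>) ^ k \<le> 7/4" using pow_bound[OF d] kd by (simp add: k_def)
    then have pk: "sqrt (1 + \<delta>) ^ k \<le> sqrt (7/4)" by (simp add: real_sqrt_power[symmetric])
    have pk0: "0 < sqrt (1 + \<delta>) ^ k" using d by simp
    have "F * mx u' ^ k \<le> F * (mx u * sqrt (1 + \<delta>)) ^ k"
      by (intro mult_left_mono power_mono mx' F0 mx0)
    also have "\<dots> = (F * mx u ^ k) * sqrt (1 + \<delta>) ^ k" by (simp add: power_mult_distrib)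
    also have "\<dots> < (\<bar>det (Bm \<sigma> z u)\<bar> * sqrt (8/7) ^ Suc N) * sqrt (1 + \<delta>) ^ k"
      using Suc.prems(4) pk0 unfolding F_def k_def by (intro mult_strict_right_mono) auto
    also have "\<dots> = (\<bar>det (Bm \<sigma> z u)\<bar> * sqrt (8/7) ^ N * sqrt (8/7)) * sqrt (1 + \<delta>) ^ k"
      by simp
    also have "\<dots> \<le> (\<bar>det (Bm \<sigma> z u)\<bar> * sqrt (8/7) ^ N * sqrt (8/7)) * sqrt (7/4)"
      by (rule mult_left_mono[OF pk]) simp
    also have "\<dots> = \<bar>det (Bm \<sigma> z u)\<bar> * sqrt (8/7) ^ N * (sqrt (8/7) * sqrt (7/4))" by simp
    also have "sqrt (8/7) * sqrt (7/4) = sqrt 2" by (simp add: real_sqrt_mult[symmetric])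
    finally have hp': "F * mx u' ^ k < \<bar>det (Bm \<sigma> z u')\<bar> * sqrt (8/7) ^ N"
      using det' by (simp add: algebra_simps)
    have hp'': "(fact CARD('n) * (\<Prod>i\<in>{i. \<sigma> i = None}. norm (z i))) * mx u' ^ card {i. \<sigma> i \<noteq> None}
              < \<bar>det (Bm \<sigma> z u')\<bar> * sqrt (8/7) ^ N" using hp' unfolding F_def k_def .
    note ex = Suc.IH[OF hv' hu' hs' hp'']
    then obtain u2 :: "'s \<Rightarrow> real^'n" and v2 :: "'b \<Rightarrow> real^'n" and mu where r: "0 < mu" "\<forall>s. norm (u2 s) \<le> mu" "\<forall>a. norm (v2 a) \<le> 1 / (sqrt \<delta> * mu)"
      "\<forall>s a. u2 s \<bullet> v2 a = u' s \<bullet> v' a" by blast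
    have "0 < mu \<and> (\<forall>s. norm (u2 s) \<le> mu) \<and> (\<forall>a. norm (v2 a) \<le> 1 / (sqrt \<delta> * mu))
           \<and> (\<forall>s a. u2 s \<bullet> v2 a = u s \<bullet> v a)" using r inn by simp
    then show ?thesis by blast
  qed
qed

lemma tti_nonneg: "0 \<le> two_to_inf_norm (U :: 'r::finite \<Rightarrow> nat \<Rightarrow> real) k"
proof -
  obtain i :: 'r where True by blast
  have "0 \<le> sqrt (\<Sum>l<k. (U i l)\<^sup>2)" by (simp add: sum_nonneg)
  also have "\<dots> \<le> two_to_inf_norm U k" unfolding two_to_inf_norm_def by (rule Max_ge) auto
  finally show ?thesis .
qed

lemma tti_le:
  assumes "\<And>i. sqrt (\<Sum>l<k. (U i l)\<^sup>2) \<le> b"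
  shows "two_to_inf_norm (U :: 'r::finite \<Rightarrow> nat \<Rightarrow> real) k \<le> b"
  unfolding two_to_inf_norm_def using assms by (subst Max_le_iff) auto

lemma maxnorm_le:
  fixes M :: "real^'a::finite^'s::finite"
  assumes "\<forall>s a. M $ s $ a = (\<Sum>l<k. U s l * V a l)"
  shows "max_norm M \<le> two_to_inf_norm U k * two_to_inf_norm V k"
  unfolding max_norm_def
proof (rule cInf_lower)
  show "two_to_inf_norm U k * two_to_inf_norm V k \<in> {two_to_inf_norm U k * two_to_inf_norm V k |U V k.
      \<forall>s a. M $ s $ a = (\<Sum>l<k. U s l * V a l)}" using assms by blast
  show "bdd_below {two_to_inf_norm U k * two_to_inf_norm V k |U V k.
      \<forall>s a. M $ s $ a = (\<Sum>l<k. U s l * V a l)}"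
    by (rule bdd_belowI[of _ 0]) (auto intro!: mult_nonneg_nonneg tti_nonneg)
qed

lemma vec_factor:
  fixes M :: "real^'a::finite^'s::finite" and u :: "'s \<Rightarrow> real^'n::finite" and v :: "'a \<Rightarrow> real^'n"
  assumes "\<forall>s a. M $ s $ a = u s \<bullet> v a" "\<forall>s. norm (u s) \<le> mu" "\<forall>a. norm (v a) \<le> mv" "0 \<le> mu"
  shows "max_norm M \<le> mu * mv"
proof -
  obtain h where h: "bij_betw h {0..<card (UNIV::'n set)} (UNIV::'n set)"
    using ex_bij_betw_nat_finite[of "UNIV::'n set"] by auto
  define K where "K = card (UNIV::'n set)"
  have h': "bij_betw h {..<K} UNIV" using h by (simp add: K_def atLeast0LessThan)
  have sum_eq: "(\<Sum>l<K. f (h l)) = (\<Sum>j\<in>UNIV. f j)" for f :: "'n \<Rightarrow> real"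
    using sum.reindex_bij_betw[OF h', of f] by simp
  define U where "U = (\<lambda>s l. u s $ h l)"
  define V where "V = (\<lambda>a l. v a $ h l)"
  have fac: "\<forall>s a. M $ s $ a = (\<Sum>l<K. U s l * V a l)"
    using assms(1) by (simp add: U_def V_def sum_eq[of "\<lambda>j. u _ $ j * v _ $ j"] inner_vec_def)
  have nrm: "sqrt (\<Sum>l<K. ((x :: real^'n) $ h l)\<^sup>2) = norm x" for x
    using sum_eq[of "\<lambda>j. (x $ j)\<^sup>2"] by (simp add: norm_vec_def L2_set_def)
  have tu: "two_to_inf_norm U K \<le> mu"
    by (rule tti_le) (simp add: U_def nrm assms(2))
  have tv: "two_to_inf_norm V K \<le> mv"
    by (rule tti_le) (simp add: V_def nrm assms(3))
  have "max_norm M \<le> two_to_inf_norm U K * two_to_inf_norm V K" by (rule maxnorm_le[OF fac])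
  also have "\<dots> \<le> mu * mv" by (rule mult_mono[OF tu tv assms(4) tti_nonneg])
  finally show ?thesis .
qed

lemma maxnorm_rank:
  fixes r :: "real^'a::finite^'s::finite" and d :: nat
  assumes hr: "\<forall>s a. \<bar>r$s$a\<bar> \<le> 1" and rk: "rank r \<le> d div 2"
  shows "max_norm r \<le> sqrt d"
proof (cases "\<forall>s. r $ s = 0")
  case True
  have "max_norm r \<le> 0 * 0"
    by (rule vec_factor[of r "\<lambda>s. 0::real^'a" "\<lambda>a. 0"]) (use True in auto)
  moreover have "0 \<le> sqrt (real d)" by simp
  ultimately show ?thesis by linarith
next
  case False
  then obtain s0 where s0: "r $ s0 \<noteq> 0" by blast
  define u where "u = (\<lambda>s. r $ s)"
  define W where "W = span (range u)"
  have sW: "subspace W" by (simp add: W_def subspace_span)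
  have "rows r = range u" by (auto simp: rows_def row_def u_def vec_lambda_eta)
  then have rankW: "rank r = dim W" by (simp add: row_rank_def W_def)
  have uW: "u s \<in> W" for s by (simp add: W_def span_base)
  have "\<not> W \<subseteq> {0}" using uW[of s0] s0 by (auto simp: u_def)
  then have k1: "1 \<le> dim W" using dim_eq_0[of W] by linarith
  have d2: "2 \<le> d" using k1 rk rankW by linarith
  define \<delta> where "\<delta> = 1 / real d"
  have dpos: "0 < \<delta>" using d2 by (simp add: \<delta>_def)
  have "\<forall>a. \<exists>y. y \<in> W \<and> (\<forall>w\<in>W. orthogonal (axis a 1 - y) w)"
  proof
    fix a :: 'a
    obtain y z where "y \<in> span (range u)" "\<And>w. w \<in> span (range u) \<Longrightarrow> orthogonal z w" "axis a 1 = y + z"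
      using orthogonal_subspace_decomp_exists[of "range u" "axis a 1"] by metis
    then show "\<exists>y. y \<in> W \<and> (\<forall>w\<in>W. orthogonal (axis a 1 - y) w)"
      by (intro exI[of _ y]) (auto simp: W_def)
  qed
  then obtain v where v: "\<And>a. v a \<in> W" "\<And>a w. w \<in> W \<Longrightarrow> orthogonal (axis a 1 - v a) w"
    by metis
  have inn: "u s \<bullet> v a = r $ s $ a" for s a
  proof -
    have "(axis a 1 - v a) \<bullet> u s = 0" using v(2)[OF uW[of s]] by (simp add: orthogonal_def)
    then have "axis a 1 \<bullet> u s - v a \<bullet> u s = 0" by (simp only: inner_diff_left)
    then have "u s \<bullet> v a = axis a 1 \<bullet> u s" by (simp add: inner_commute)
    also have "\<dots> = r $ s $ a" by (simp add: inner_axis' u_def)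
    finally show ?thesis .
  qed
  have hu: "\<forall>s a. \<bar>u s \<bullet> v a\<bar> \<le> 1" using hr inn by simp
  obtain B where B: "B \<subseteq> range u" "independent B" "range u \<subseteq> span B" "card B = dim (range u)"
    using basis_exists[of "range u"] by metis
  have spanB: "span B = W"
  proof
    show "span B \<subseteq> W" unfolding W_def using B(1) by (rule span_mono)
    show "W \<subseteq> span B" unfolding W_def using B(3) by (simp add: span_minimal subspace_span)
  qed
  have cardB: "card B = dim W" using B(4) by (simp add: W_def)
  define Wp where "Wp = {y. \<forall>x\<in>W. orthogonal x y}"
  have sWp: "subspace Wp" unfolding Wp_def by (rule subspace_orthogonal_to_vectors)
  have dimWp: "dim Wp + dim W = CARD('a)"
    using dim_subspace_orthogonal_to_vectors[OF sW subspace_UNIV subset_UNIV] by (simp add: Wp_def)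
  obtain Z where Z: "Z \<subseteq> Wp" "independent Z" "Wp \<subseteq> span Z" "card Z = dim Wp"
    using basis_exists[of Wp] by metis
  have finB: "finite B" using B(2) by (rule finiteI_independent)
  have finZ: "finite Z" using Z(2) by (rule finiteI_independent)
  have spanBZ: "span (B \<union> Z) = UNIV"
  proof (rule set_eqI, rule iffI)
    fix x :: "real^'a"
    obtain y z where yz: "y \<in> span (range u)" "\<And>w. w \<in> span (range u) \<Longrightarrow> orthogonal z w" "x = y + z"
      using orthogonal_subspace_decomp_exists[of "range u" x] by metis
    have "y \<in> span B" using yz(1) spanB by (simp add: W_def)
    then have y: "y \<in> span (B \<union> Z)" by (meson span_mono sup_ge1 subsetD)
    have "z \<in> Wp" using yz(2) by (auto simp: Wp_def W_def orthogonal_commute)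
    then have "z \<in> span Z" using Z(3) by blast
    then have z: "z \<in> span (B \<union> Z)" by (meson span_mono sup_ge2 subsetD)
    show "x \<in> span (B \<union> Z)" using y z yz(3) by (simp add: span_add)
  qed simp
  have dimBZ: "dim (B \<union> Z) = CARD('a)"
    using spanBZ dim_span[of "B \<union> Z"] by simp
  have cardBZ: "card (B \<union> Z) = CARD('a)"
  proof (rule antisym)
    have "card (B \<union> Z) \<le> card B + card Z" by (rule card_Un_le)
    then show "card (B \<union> Z) \<le> CARD('a)" using cardB Z(4) dimWp by linarith
    show "CARD('a) \<le> card (B \<union> Z)" using dim_le_card'[of "B \<union> Z"] finB finZ dimBZ by simp
  qed
  obtain f where f: "bij_betw f (UNIV::'a set) (B \<union> Z)"
    using finite_same_card_bij[of "UNIV::'a set" "B \<union> Z"] finB finZ cardBZ by auto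
  define \<sigma> where "\<sigma> = (\<lambda>i. if f i \<in> B then Some (SOME s. u s = f i) else None)"
  have Bmf: "Bm \<sigma> f u = (\<chi> i. f i)"
  proof (subst vec_eq_iff, intro allI)
    fix i
    show "Bm \<sigma> f u $ i = (\<chi> i. f i) $ i"
    proof (cases "f i \<in> B")
      case True
      then have "\<exists>s. u s = f i" using B(1) by (metis imageE subsetD)
      then have "u (SOME s. u s = f i) = f i" by (rule someI_ex)
      then show ?thesis using True by (simp add: Bm_def \<sigma>_def)
    qed (simp add: Bm_def \<sigma>_def)
  qed
  have "rows (\<chi> i. f i) = range f" by (auto simp: rows_def row_def vec_lambda_eta)
  also have "range f = B \<union> Z" using f by (simp add: bij_betw_def)
  finally have "rank (\<chi> i. f i) = CARD('a)" using dimBZ by (simp add: row_rank_def)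
  then have det0: "det (Bm \<sigma> f u) \<noteq> 0" unfolding Bmf by (simp add: det_eq_0_rank)
  have "{i. \<sigma> i \<noteq> None} = {i. f i \<in> B}" by (auto simp: \<sigma>_def)
  moreover have "card {i. f i \<in> B} = card B"
  proof -
    have "inj f" using f by (simp add: bij_betw_def)
    then have "card (f ` {i. f i \<in> B}) = card {i. f i \<in> B}" by (simp add: card_image inj_on_def inj_def)
    moreover have "f ` {i. f i \<in> B} = B" using f by (auto simp: bij_betw_def)
    ultimately show ?thesis by simp
  qed
  ultimately have cardS: "card {i. \<sigma> i \<noteq> None} = dim W" using cardB by simp
  have kd: "real (card {i. \<sigma> i \<noteq> None}) * \<delta> \<le> 1/2"
  proof -
    have "real (dim W) \<le> real d / 2" using rk rankW by linarith
    then show ?thesis using cardS d2 by (simp add: \<delta>_def field_simps)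
  qed
  have zW: "\<And>i x. \<sigma> i = None \<Longrightarrow> x \<in> W \<Longrightarrow> f i \<bullet> x = 0"
  proof -
    fix i x assume "\<sigma> i = None" "x \<in> W"
    then have "f i \<notin> B" by (auto simp: \<sigma>_def split: if_splits)
    then have "f i \<in> Z" using f by (auto simp: bij_betw_def)
    then have "f i \<in> Wp" using Z(1) by blast
    then show "f i \<bullet> x = 0" using \<open>x \<in> W\<close> by (auto simp: Wp_def orthogonal_def inner_commute)
  qed
  define F where "F = (fact CARD('a) * (\<Prod>i\<in>{i. \<sigma> i = None}. norm (f i))) * mx u ^ card {i. \<sigma> i \<noteq> None}"
  have "1 < sqrt (8/7::real)" by simp
  then obtain N where N: "F / \<bar>det (Bm \<sigma> f u)\<bar> < sqrt (8/7) ^ N" using real_arch_pow by blast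
  have hp: "F < \<bar>det (Bm \<sigma> f u)\<bar> * sqrt (8/7) ^ N"
    using N det0 by (simp add: divide_less_eq mult.commute)
  have us0: "u s0 \<noteq> 0" using s0 by (simp add: u_def)
  obtain u' :: "'s \<Rightarrow> real^'a" and v' :: "'a \<Rightarrow> real^'a" and mu where
    r: "0 < mu" "\<forall>s. norm (u' s) \<le> mu" "\<forall>a. norm (v' a) \<le> 1 / (sqrt \<delta> * mu)"
      "\<forall>s a. u' s \<bullet> v' a = u s \<bullet> v a"
    using iterate[OF sW dpos kd zW _ hu us0 hp[unfolded F_def]] v(1) by blast
  have "max_norm r \<le> mu * (1 / (sqrt \<delta> * mu))"
    by (rule vec_factor[of r u' v']) (use r inn in auto)
  also have "\<dots> = sqrt d" using r(1) d2 by (simp add: \<delta>_def real_sqrt_divide)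
  finally show ?thesis .
qed

lemma op_norm_nonneg: "0 \<le> op_norm (X :: real^'a::finite^'s::finite)"
  unfolding op_norm_def by (rule onorm_pos_le) simp

lemma op_norm_bound: "norm (X *v x) \<le> op_norm X * norm x"
  unfolding op_norm_def using onorm[OF matrix_vector_mul_bounded_linear, of X x] by simp

lemma sq_tti: "(\<Sum>l<k. (U i l)\<^sup>2) \<le> (two_to_inf_norm (U :: 'r::finite \<Rightarrow> nat \<Rightarrow> real) k)\<^sup>2"
proof -
  have "sqrt (\<Sum>l<k. (U i l)\<^sup>2) \<le> two_to_inf_norm U k" unfolding two_to_inf_norm_def by (rule Max_ge) auto
  then have "(sqrt (\<Sum>l<k. (U i l)\<^sup>2))\<^sup>2 \<le> (two_to_inf_norm U k)\<^sup>2"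
    by (rule power_mono) (simp add: sum_nonneg)
  then show ?thesis by (simp add: sum_nonneg)
qed

lemma l2_cols:
  fixes U :: "'r::finite \<Rightarrow> nat \<Rightarrow> real"
  shows "L2_set (\<lambda>l. norm (\<chi> i. U i l)) {..<k} \<le> sqrt (real CARD('r)) * two_to_inf_norm U k"
proof -
  have "L2_set (\<lambda>l. norm (\<chi> i. U i l)) {..<k} = sqrt (\<Sum>l<k. \<Sum>i\<in>UNIV. (U i l)\<^sup>2)"
    by (simp add: L2_set_def norm_vec_def sum_nonneg)
  also have "(\<Sum>l<k. \<Sum>i\<in>UNIV. (U i l)\<^sup>2) = (\<Sum>i\<in>UNIV. \<Sum>l<k. (U i l)\<^sup>2)" by (rule sum.swap)
  also have "\<dots> \<le> (\<Sum>i\<in>(UNIV::'r set). (two_to_inf_norm U k)\<^sup>2)" by (rule sum_mono) (rule sq_tti)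
  also have "\<dots> = real CARD('r) * (two_to_inf_norm U k)\<^sup>2" by simp
  finally have "L2_set (\<lambda>l. norm (\<chi> i. U i l)) {..<k} \<le> sqrt (real CARD('r) * (two_to_inf_norm U k)\<^sup>2)"
    by simp
  also have "\<dots> = sqrt (real CARD('r)) * two_to_inf_norm U k" by (simp add: real_sqrt_mult tti_nonneg)
  finally show ?thesis .
qed

lemma ip_bound:
  fixes X M :: "real^'a::finite^'s::finite"
  assumes fac: "\<forall>s a. M$s$a = (\<Sum>l<k. U s l * V a l)"
  shows "\<bar>\<Sum>s\<in>UNIV. \<Sum>a\<in>UNIV. X$s$a * M$s$a\<bar>
         \<le> op_norm X * (sqrt CARD('s) * sqrt CARD('a)) * (two_to_inf_norm U k * two_to_inf_norm V k)"
proof -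
  define uu where "uu l = (\<chi> s. U s l)" for l
  define vv where "vv l = (\<chi> a. V a l)" for l
  have "(\<Sum>s\<in>UNIV. \<Sum>a\<in>UNIV. X$s$a * M$s$a) = (\<Sum>s\<in>UNIV. \<Sum>a\<in>UNIV. \<Sum>l<k. X$s$a * U s l * V a l)"
    by (simp add: fac sum_distrib_left mult.assoc)
  also have "\<dots> = (\<Sum>s\<in>UNIV. \<Sum>l<k. \<Sum>a\<in>UNIV. X$s$a * U s l * V a l)"
    by (rule sum.cong[OF refl], rule sum.swap)
  also have "\<dots> = (\<Sum>l<k. \<Sum>s\<in>UNIV. \<Sum>a\<in>UNIV. X$s$a * U s l * V a l)"
    by (rule sum.swap)
  also have "\<dots> = (\<Sum>l<k. uu l \<bullet> (X *v vv l))"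
    by (simp add: uu_def vv_def inner_vec_def matrix_vector_mult_def sum_distrib_left mult.assoc mult.left_commute)
  finally have eq: "(\<Sum>s\<in>UNIV. \<Sum>a\<in>UNIV. X$s$a * M$s$a) = (\<Sum>l<k. uu l \<bullet> (X *v vv l))" .
  have "\<bar>\<Sum>l<k. uu l \<bullet> (X *v vv l)\<bar> \<le> (\<Sum>l<k. \<bar>uu l \<bullet> (X *v vv l)\<bar>)" by (rule sum_abs)
  also have "\<dots> \<le> (\<Sum>l<k. norm (uu l) * (op_norm X * norm (vv l)))"
  proof (rule sum_mono)
    fix l
    have "\<bar>uu l \<bullet> (X *v vv l)\<bar> \<le> norm (uu l) * norm (X *v vv l)" by (rule Cauchy_Schwarz_ineq2)
    also have "\<dots> \<le> norm (uu l) * (op_norm X * norm (vv l))"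
      by (rule mult_left_mono[OF op_norm_bound]) simp
    finally show "\<bar>uu l \<bullet> (X *v vv l)\<bar> \<le> norm (uu l) * (op_norm X * norm (vv l))" .
  qed
  also have "\<dots> = op_norm X * (\<Sum>l<k. \<bar>norm (uu l)\<bar> * \<bar>norm (vv l)\<bar>)"
    by (simp add: sum_distrib_left mult.assoc mult.left_commute)
  also have "\<dots> \<le> op_norm X * (L2_set (\<lambda>l. norm (uu l)) {..<k} * L2_set (\<lambda>l. norm (vv l)) {..<k})"
    by (rule mult_left_mono[OF L2_set_mult_ineq op_norm_nonneg])
  also have "\<dots> \<le> op_norm X * ((sqrt CARD('s) * two_to_inf_norm U k) * (sqrt CARD('a) * two_to_inf_norm V k))"
    unfolding uu_def vv_def
    by (intro mult_left_mono mult_mono l2_cols op_norm_nonneg) (auto intro!: L2_set_nonneg mult_nonneg_nonneg tti_nonneg)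
  also have "\<dots> = op_norm X * (sqrt CARD('s) * sqrt CARD('a)) * (two_to_inf_norm U k * two_to_inf_norm V k)"
    by (simp add: algebra_simps)
  finally show ?thesis using eq by simp
qed

lemma exists_fac:
  fixes M :: "real^'a::finite^'s::finite"
  shows "\<exists>(U::'s \<Rightarrow> nat \<Rightarrow> real) (V::'a \<Rightarrow> nat \<Rightarrow> real) (k::nat). \<forall>s a. M$s$a = (\<Sum>l<k. U s l * V a l)"
proof -
  obtain h where h: "bij_betw h {0..<card (UNIV::'a set)} (UNIV::'a set)"
    using ex_bij_betw_nat_finite[of "UNIV::'a set"] by auto
  then have h': "bij_betw h {..<CARD('a)} UNIV" by (simp add: atLeast0LessThan)
  have fac: "M$s$a = (\<Sum>l<CARD('a). M$s$(h l) * (if h l = a then 1 else 0))" for s a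
  proof -
    have "(\<Sum>j\<in>UNIV. M$s$j * (if j = a then 1 else 0)) = (\<Sum>j\<in>UNIV. if j = a then M$s$j else 0)"
      by (rule sum.cong) auto
    also have "\<dots> = M$s$a" by (simp add: sum.delta)
    finally show ?thesis
      using sum.reindex_bij_betw[OF h', of "\<lambda>j. M$s$j * (if j = a then 1 else 0)"] by simp
  qed
  show ?thesis
    by (rule exI[of _ "\<lambda>s l. M$s$(h l)"], rule exI[of _ "\<lambda>a l. if h l = a then (1::real) else 0"],
        rule exI[of _ "CARD('a)"], intro allI, rule fac)
qed

lemma inf_bound:
  fixes Y :: "real set"
  assumes "Y \<noteq> {}" "\<forall>y\<in>Y. c \<le> K * y" "0 \<le> K"
  shows "c \<le> K * Inf Y"
proof (cases "K = 0")
  case True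
  then show ?thesis using assms by auto
next
  case False
  then have K: "0 < K" using assms(3) by simp
  have "c / K \<le> Inf Y"
    by (rule cInf_greatest[OF assms(1)]) (use assms(2) K in \<open>auto simp: divide_le_eq mult.commute\<close>)
  then show ?thesis using K by (simp add: divide_le_eq mult.commute)
qed

lemma ip_maxnorm:
  fixes X M :: "real^'a::finite^'s::finite"
  shows "\<bar>\<Sum>s\<in>UNIV. \<Sum>a\<in>UNIV. X$s$a * M$s$a\<bar> \<le> op_norm X * (sqrt CARD('s) * sqrt CARD('a)) * max_norm M"
  unfolding max_norm_def
proof (rule inf_bound)
  show "{two_to_inf_norm U k * two_to_inf_norm V k |U V k. \<forall>s a. M $ s $ a = (\<Sum>l<k. U s l * V a l)} \<noteq> {}"
    using exists_fac[of M] by blast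
  show "\<forall>y\<in>{two_to_inf_norm U k * two_to_inf_norm V k |U V k. \<forall>s a. M $ s $ a = (\<Sum>l<k. U s l * V a l)}.
          \<bar>\<Sum>s\<in>UNIV. \<Sum>a\<in>UNIV. X$s$a * M$s$a\<bar> \<le> op_norm X * (sqrt CARD('s) * sqrt CARD('a)) * y"
    using ip_bound by blast
  show "0 \<le> op_norm X * (sqrt CARD('s) * sqrt CARD('a))" by (simp add: op_norm_nonneg)
qed

theorem corollary3:
  fixes \<mu> :: "'s::finite \<Rightarrow> real"
    and \<pi>\<theta> \<pi>\<beta> :: "'s \<Rightarrow> 'a::finite \<Rightarrow> real"
    and r Qhat :: "real^'a^'s"
    and d :: nat
  assumes "is_state_distr \<mu>"
    and "is_policy \<pi>\<theta>" and "is_policy \<pi>\<beta>"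
    and "\<forall>s a. 0 \<le> r $ s $ a \<and> r $ s $ a \<le> 1"
    and "rank r \<le> d div 2"
    and "feasible (occ \<mu> \<pi>\<beta>) r Qhat"
    and "\<forall>M. feasible (occ \<mu> \<pi>\<beta>) r M \<longrightarrow> max_norm Qhat \<le> max_norm M"
  shows "\<bar>policy_value \<mu> \<pi>\<theta> Qhat - policy_value \<mu> \<pi>\<theta> r\<bar>
           \<le> 2 * sqrt (real (d * CARD('s) * CARD('a))) * Dis (occ \<mu> \<pi>\<beta>) (occ \<mu> \<pi>\<theta>)"
proof -
  define p where "p = occ \<mu> \<pi>\<beta>"
  define q where "q = occ \<mu> \<pi>\<theta>"
  define ip where "ip X M = (\<Sum>s\<in>UNIV. \<Sum>a\<in>UNIV. X$s$a * M$s$a)" for X M :: "real^'a^'s"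
  have hr: "\<forall>s a. \<bar>r$s$a\<bar> \<le> 1" using assms(4) by auto
  have mr: "max_norm r \<le> sqrt d" by (rule maxnorm_rank[OF hr assms(5)])
  have "entry_inf_norm r \<le> 1" unfolding entry_inf_norm_def using hr by (subst Max_le_iff) auto
  then have "feasible p r r" by (simp add: feasible_def)
  then have mQ: "max_norm Qhat \<le> max_norm r" using assms(7) by (simp add: p_def)
  have agree: "\<forall>s a. (s,a) \<in> supp p \<longrightarrow> Qhat $ s $ a = r $ s $ a" using assms(6) by (simp add: feasible_def p_def)
  define K where "K = 2 * sqrt (real (d * CARD('s) * CARD('a)))"
  have K: "K = 2 * sqrt d * (sqrt CARD('s) * sqrt CARD('a))" by (simp add: K_def real_sqrt_mult)
  have K0: "0 \<le> K" by (simp add: K_def)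
  have diff: "policy_value \<mu> \<pi>\<theta> Qhat - policy_value \<mu> \<pi>\<theta> r = ip q Qhat - ip q r"
    by (simp add: policy_value_def ip_def q_def)
  have lin: "ip (g - q) M = ip g M - ip q M" for g M
    by (simp add: ip_def left_diff_distrib sum_subtractf)
  have bound: "\<bar>ip q Qhat - ip q r\<bar> \<le> K * op_norm (g - q)" if g: "is_distr g" "supp g \<subseteq> supp p" for g
  proof -
    have "ip g Qhat = ip g r" unfolding ip_def
    proof (intro sum.cong refl)
      fix s a
      show "g$s$a * Qhat$s$a = g$s$a * r$s$a"
      proof (cases "g$s$a = 0")
        case False
        then have "(s,a) \<in> supp p" using g(2) by (auto simp: supp_def)
        then show ?thesis using agree by simp
      qed simp
    qed
    then have "ip q Qhat - ip q r = ip (g - q) r - ip (g - q) Qhat" by (simp add: lin)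
    then have "\<bar>ip q Qhat - ip q r\<bar> \<le> \<bar>ip (g - q) r\<bar> + \<bar>ip (g - q) Qhat\<bar>" by linarith
    also have "\<dots> \<le> op_norm (g - q) * (sqrt CARD('s) * sqrt CARD('a)) * max_norm r
                   + op_norm (g - q) * (sqrt CARD('s) * sqrt CARD('a)) * max_norm Qhat"
      unfolding ip_def by (intro add_mono ip_maxnorm)
    also have "\<dots> \<le> op_norm (g - q) * (sqrt CARD('s) * sqrt CARD('a)) * sqrt d
                   + op_norm (g - q) * (sqrt CARD('s) * sqrt CARD('a)) * sqrt d"
      using mr mQ op_norm_nonneg[of "g - q"] by (intro add_mono mult_left_mono) auto
    also have "\<dots> = K * op_norm (g - q)" by (simp add: K algebra_simps)
    finally show ?thesis .
  qed
  have ne: "{op_norm (g - q) | g. is_distr g \<and> supp g \<subseteq> supp p} \<noteq> {}"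
  proof -
    have "is_distr p"
      using assms(1,3) unfolding is_distr_def is_state_distr_def is_policy_def p_def occ_def
      by (simp add: sum_distrib_left[symmetric])
    then show ?thesis by blast
  qed
  have "\<bar>ip q Qhat - ip q r\<bar> \<le> K * Dis p q"
    unfolding Dis_def by (rule inf_bound[OF ne _ K0]) (use bound in blast)
  then show ?thesis using diff by (simp add: K_def p_def q_def)
qed

end
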